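(* Let $X$ be a cubic vertex-transitive graph for which $1$ is a simple eigenvalue, and let $\mathbf{z}$ be an eigenvector for the eigenvalue $1$ all of whose entries lie in $\{1,-1\}$. Let $V^+=\{x\in V(X)\mid \mathbf{z}(x)=1\}$, $V^-=\{x\in V(X)\mid \mathbf{z}(x)=-1\}$, and let $M$ be the set of edges of $X$ with one end in $V^+$ and the other in $V^-$. Then: (i) the induced subgraph $X[V^+]$ is a disjoint union of cycles all of the same length; (ii) $X[V^+]$ is isomorphic to $X[V^-]$, and $V^+$ and $V^-$ are blocks of imprimitivity of the action of $\mathrm{Aut}(X)$ on $V(X)$; (iii) $\{V^+,V^-\}$ is the unique partition of $V(X)$ into two parts such that both parts induce $2$-regular subgraphs of $X$; (iv) $M$ is a perfect matching of $X$; (v) $\mathrm{Aut}(X)$ fixes $M$ set-wise and acts transitively on the arcs of $M$ (ordered pairs $(x,y)$ with $xy\in M$).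
   Context: Eigenvalues are those of the adjacency matrix; an eigenvalue is simple if its eigenspace is $1$-dimensional. (For a vertex-transitive graph with a simple eigenvalue, an eigenvector with all entries $\pm1$ exists after scaling.) $X[W]$ denotes the subgraph induced by $W\subseteq V(X)$. *)

theory Defs
  imports "HOL-Analysis.Analysis"
begin

text \<open>Finite simple graphs on a finite vertex type 'a, given by an adjacency relation E.\<close>

definition simple_graph :: "('a \<Rightarrow> 'a \<Rightarrow> bool) \<Rightarrow> bool" where
  "simple_graph E \<longleftrightarrow> (\<forall>x y. E x y \<longrightarrow> E y x) \<and> (\<forall>x. \<not> E x x)"

definition cubic :: "('a \<Rightarrow> 'a \<Rightarrow> bool) \<Rightarrow> bool" where
  "cubic E \<longleftrightarrow> (\<forall>x. card {y. E x y} = 3)"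

definition automorphisms :: "('a \<Rightarrow> 'a \<Rightarrow> bool) \<Rightarrow> ('a \<Rightarrow> 'a) set" where
  "automorphisms E = {g. bij g \<and> (\<forall>x y. E x y \<longleftrightarrow> E (g x) (g y))}"

definition vertex_transitive :: "('a \<Rightarrow> 'a \<Rightarrow> bool) \<Rightarrow> bool" where
  "vertex_transitive E \<longleftrightarrow> (\<forall>x y. \<exists>g\<in>automorphisms E. g x = y)"

definition adj_matrix :: "('a::finite \<Rightarrow> 'a \<Rightarrow> bool) \<Rightarrow> real^'a^'a" where
  "adj_matrix E = (\<chi> i j. if E i j then 1 else 0)"

definition eigenspace :: "real^'a^'a \<Rightarrow> real \<Rightarrow> (real^'a) set" where
  "eigenspace A c = {v. A *v v = c *\<^sub>R v}"

definition simple_eigenvalue :: "real^'a^'a \<Rightarrow> real \<Rightarrow> bool" where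
  "simple_eigenvalue A c \<longleftrightarrow> dim (eigenspace A c) = 1"

definition induced_adj :: "('a \<Rightarrow> 'a \<Rightarrow> bool) \<Rightarrow> 'a set \<Rightarrow> 'a \<Rightarrow> 'a \<Rightarrow> bool" where
  "induced_adj E S u v \<longleftrightarrow> E u v \<and> u \<in> S \<and> v \<in> S"

definition component :: "('a \<Rightarrow> 'a \<Rightarrow> bool) \<Rightarrow> 'a set \<Rightarrow> 'a \<Rightarrow> 'a set" where
  "component E S x = {y. (induced_adj E S)\<^sup>*\<^sup>* x y}"

definition induces_cycle :: "('a \<Rightarrow> 'a \<Rightarrow> bool) \<Rightarrow> 'a set \<Rightarrow> nat \<Rightarrow> bool" where
  "induces_cycle E C k \<longleftrightarrow> k \<ge> 3 \<and> (\<exists>vs. length vs = k \<and> distinct vs \<and> set vs = C \<and>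
     (\<forall>u\<in>C. \<forall>v\<in>C. E u v \<longleftrightarrow>
        (\<exists>i<k. (u = vs ! i \<and> v = vs ! ((i + 1) mod k)) \<or> (v = vs ! i \<and> u = vs ! ((i + 1) mod k)))))"

definition union_of_equal_cycles :: "('a \<Rightarrow> 'a \<Rightarrow> bool) \<Rightarrow> 'a set \<Rightarrow> bool" where
  "union_of_equal_cycles E S \<longleftrightarrow> (\<exists>k. \<forall>x\<in>S. induces_cycle E (component E S x) k)"

definition induced_isomorphic :: "('a \<Rightarrow> 'a \<Rightarrow> bool) \<Rightarrow> 'a set \<Rightarrow> 'a set \<Rightarrow> bool" where
  "induced_isomorphic E S T \<longleftrightarrow>
     (\<exists>f. bij_betw f S T \<and> (\<forall>x\<in>S. \<forall>y\<in>S. E x y \<longleftrightarrow> E (f x) (f y)))"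

definition block :: "('a \<Rightarrow> 'a) set \<Rightarrow> 'a set \<Rightarrow> bool" where
  "block G B \<longleftrightarrow> B \<noteq> {} \<and> (\<forall>g\<in>G. g ` B = B \<or> g ` B \<inter> B = {})"

definition two_regular_induced :: "('a \<Rightarrow> 'a \<Rightarrow> bool) \<Rightarrow> 'a set \<Rightarrow> bool" where
  "two_regular_induced E S \<longleftrightarrow> (\<forall>x\<in>S. card {y\<in>S. E x y} = 2)"

definition two_partition :: "'a set \<Rightarrow> 'a set \<Rightarrow> bool" where
  "two_partition P Q \<longleftrightarrow> P \<noteq> {} \<and> Q \<noteq> {} \<and> P \<inter> Q = {} \<and> P \<union> Q = UNIV"

definition edges :: "('a \<Rightarrow> 'a \<Rightarrow> bool) \<Rightarrow> 'a set set" where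
  "edges E = {{x, y} | x y. E x y}"

definition perfect_matching :: "('a \<Rightarrow> 'a \<Rightarrow> bool) \<Rightarrow> 'a set set \<Rightarrow> bool" where
  "perfect_matching E M \<longleftrightarrow> M \<subseteq> edges E \<and> (\<forall>v. \<exists>!e. e \<in> M \<and> v \<in> e)"

end

theory Submission
  imports Defs
begin


lemma eig_subspace: "subspace (eigenspace (A::real^'n^'n) 1)"
  unfolding subspace_def eigenspace_def
  by (simp add: matrix_vector_right_distrib matrix_vector_mult_scaleR)

lemma eig_unique:
  fixes z w :: "real^'n"
  assumes "simple_eigenvalue A 1" "A *v z = z" "A *v w = w"
    and "\<forall>x. z $ x = 1 \<or> z $ x = -1" "\<forall>x. w $ x = 1 \<or> w $ x = -1"
  shows "w = z \<or> w = -z"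
proof -
  have zS: "z \<in> eigenspace A 1" and wS: "w \<in> eigenspace A 1"
    using assms by (auto simp: eigenspace_def)
  have "z \<noteq> 0"
  proof
    assume "z = 0"
    hence "z $ undefined = 0" by simp
    thus False using assms(4)[rule_format, of undefined] by simp
  qed
  hence ind: "independent {z}" by (simp add: independent_insert)
  have "eigenspace A 1 \<subseteq> span {z}"
    by (rule card_ge_dim_independent) (use zS ind assms(1) in \<open>auto simp: simple_eigenvalue_def\<close>)
  with wS obtain c where c: "w = c *\<^sub>R z" by (auto simp: span_singleton)
  obtain x0 :: 'n where True by auto
  have "w $ x0 = c * z $ x0" using c by simp
  hence "c = 1 \<or> c = -1" using assms(4,5) by (metis mult.right_neutral mult_minus_right minus_equation_iff)
  thus ?thesis using c by auto
qed

lemma mult_adj: "(adj_matrix E *v w) $ x = (\<Sum>y\<in>{y. E x y}. w $ y)"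
proof -
  have "(adj_matrix E *v w) $ x = (\<Sum>y\<in>UNIV. if E x y then w $ y else 0)"
    unfolding matrix_vector_mult_def adj_matrix_def by (auto intro!: sum.cong)
  also have "\<dots> = (\<Sum>y\<in>{y\<in>UNIV. E x y}. w $ y)" using sum.inter_filter[of UNIV "\<lambda>y. w $ y" "E x"] by simp
  finally show ?thesis by simp
qed

lemma eig_pt:
  assumes "cubic E" "\<forall>x. w$x=1 \<or> w$x=-1"
  shows "(adj_matrix E *v w) $ x = w $ x \<longleftrightarrow> card {y. E x y \<and> w$y \<noteq> w$x} = 1"
proof -
  let ?N = "{y. E x y}"
  let ?S = "{y. E x y \<and> w$y = w$x}"
  let ?D = "{y. E x y \<and> w$y \<noteq> w$x}"
  have N: "?N = ?S \<union> ?D" by auto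
  have c3: "card ?S + card ?D = 3"
    using assms(1) N card_Un_disjoint[of ?S ?D] unfolding cubic_def by (metis (no_types, lifting) disjoint_iff finite mem_Collect_eq)
  have "(adj_matrix E *v w) $ x = (\<Sum>y\<in>?S \<union> ?D. w $ y)" by (simp add: mult_adj N[symmetric])
  also have "\<dots> = (\<Sum>y\<in>?S. w $ y) + (\<Sum>y\<in>?D. w $ y)" by (rule sum.union_disjoint) auto
  also have "(\<Sum>y\<in>?S. w $ y) = (\<Sum>y\<in>?S. w $ x)" by (rule sum.cong) auto
  also have "(\<Sum>y\<in>?D. w $ y) = (\<Sum>y\<in>?D. - w $ x)"
  proof (rule sum.cong)
    fix y assume "y \<in> ?D"
    thus "w $ y = - w $ x" using assms(2)[rule_format, of x] assms(2)[rule_format, of y] by auto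
  qed simp
  finally have eq: "(adj_matrix E *v w) $ x = (real (card ?S) - real (card ?D)) * w $ x"
    by (simp add: algebra_simps)
  have "w $ x \<noteq> 0" using assms(2)[rule_format, of x] by auto
  hence "(adj_matrix E *v w) $ x = w $ x \<longleftrightarrow> real (card ?S) - real (card ?D) = 1"
    using eq by auto
  also have "\<dots> \<longleftrightarrow> card ?D = 1" using c3 by linarith
  finally show ?thesis .
qed

lemma eig_iff:
  assumes "cubic E" "\<forall>x. w$x=1 \<or> w$x=-1"
  shows "adj_matrix E *v w = w \<longleftrightarrow> (\<forall>x. card {y. E x y \<and> w$y \<noteq> w$x} = 1)"
  using eig_pt[OF assms] by (simp add: vec_eq_iff)



fun walk :: "('a \<Rightarrow> 'a \<Rightarrow> bool) \<Rightarrow> 'a set \<Rightarrow> 'a \<Rightarrow> 'a \<Rightarrow> nat \<Rightarrow> 'a" where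
  "walk E S x a 0 = x"
| "walk E S x a (Suc 0) = a"
| "walk E S x a (Suc (Suc n)) =
     (SOME y. y \<in> S \<and> E (walk E S x a (Suc n)) y \<and> y \<noteq> walk E S x a n)"

declare walk.simps(3)[simp del]

lemma symE: "simple_graph E \<Longrightarrow> E a b \<Longrightarrow> E b a" by (simp add: simple_graph_def)
lemma irrE: "simple_graph E \<Longrightarrow> \<not> E a a" by (simp add: simple_graph_def)

lemma card2_eq: "A \<subseteq> B \<Longrightarrow> card A = 2 \<Longrightarrow> card B = 2 \<Longrightarrow> B = A"
  using card_subset_eq[of B A] card_ge_0_finite[of B] by simp

lemma other_nbr:
  assumes "two_regular_induced E S" "c \<in> S" "p \<in> S" "E c p"
  shows "\<exists>y. y \<in> S \<and> E c y \<and> y \<noteq> p"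
proof -
  have "card {y\<in>S. E c y} = 2" using assms unfolding two_regular_induced_def by auto
  then obtain a b where ab: "{y\<in>S. E c y} = {a, b}" "a \<noteq> b" by (auto simp: card_2_iff)
  have "p \<in> {a, b}" using ab(1) assms by blast
  thus ?thesis using ab by (metis (mono_tags, lifting) insertCI mem_Collect_eq)
qed

locale wk =
  fixes E :: "'a \<Rightarrow> 'a \<Rightarrow> bool" and S x a
  assumes sg: "simple_graph E" and reg: "two_regular_induced E S"
    and xS: "x \<in> S" and aS: "a \<in> S" and xa: "E x a"
begin

abbreviation "w \<equiv> walk E S x a"

lemma step:
  assumes "w n \<in> S" "w (Suc n) \<in> S" "E (w n) (w (Suc n))"
  shows "w (Suc (Suc n)) \<in> S \<and> E (w (Suc n)) (w (Suc (Suc n))) \<and> w (Suc (Suc n)) \<noteq> w n"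
proof -
  have "E (w (Suc n)) (w n)" using symE[OF sg assms(3)] .
  hence "\<exists>y. y \<in> S \<and> E (w (Suc n)) y \<and> y \<noteq> w n" using other_nbr[OF reg assms(2,1)] by blast
  then show ?thesis unfolding walk.simps(3) by (rule someI_ex)
qed

lemma basic: "w n \<in> S \<and> w (Suc n) \<in> S \<and> E (w n) (w (Suc n))"
proof (induction n)
  case 0 then show ?case using xS aS xa by simp
next
  case (Suc n) then show ?case using step[of n] by blast
qed

lemma basic2: "w (Suc (Suc n)) \<noteq> w n"
  using step[of n] basic[of n] by blast

lemma inS: "w n \<in> S" using basic by blast
lemma adj: "E (w n) (w (Suc n))" using basic by blast

lemma nbrs: "{y\<in>S. E (w (Suc n)) y} = {w n, w (Suc (Suc n))}"
proof (rule card2_eq)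
  have "w n \<in> S" "w (Suc (Suc n)) \<in> S" by (rule inS)+
  moreover have "E (w (Suc n)) (w n)" by (rule symE[OF sg adj])
  moreover have "E (w (Suc n)) (w (Suc (Suc n)))" by (rule adj)
  ultimately show "{w n, w (Suc (Suc n))} \<subseteq> {y\<in>S. E (w (Suc n)) y}" by simp
  show "card {w n, w (Suc (Suc n))} = 2" using basic2[of n] by (simp only: card_2_iff) blast
  show "card {y\<in>S. E (w (Suc n)) y} = 2" using reg inS unfolding two_regular_induced_def by blast
qed

end

lemma cycle_component:
  fixes E :: "'a::finite \<Rightarrow> 'a \<Rightarrow> bool"
  assumes sg: "simple_graph E" and reg: "two_regular_induced E S" and xS: "x \<in> S"
  shows "induces_cycle E (component E S x) (card (component E S x))"
proof -
  have "card {y\<in>S. E x y} = 2" using reg xS unfolding two_regular_induced_def by blast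
  then obtain a where aS: "a \<in> S" "E x a" by (metis (no_types, lifting) card.empty empty_Collect_eq zero_neq_numeral)
  interpret wk E S x a using sg reg xS aS by unfold_locales auto
  have "\<not> inj w"
  proof
    assume "inj w"
    hence "finite (UNIV :: nat set)" using finite_imageD[of w UNIV] by auto
    thus False by simp
  qed
  then obtain i j where "i \<noteq> j" "w i = w j" unfolding inj_def by blast
  hence ex: "\<exists>n. \<exists>m<n. w n = w m" by (metis linorder_neqE_nat)
  define n where "n = (LEAST n. \<exists>m<n. w n = w m)"
  obtain m where mn: "m < n" "w n = w m" using LeastI_ex[OF ex] unfolding n_def by blast
  have minim: "\<And>n' m'. n' < n \<Longrightarrow> m' < n' \<Longrightarrow> w n' \<noteq> w m'"
    using not_less_Least unfolding n_def by blast
  have m0: "m = 0"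
  proof (rule ccontr)
    assume "m \<noteq> 0"
    then obtain m' where m': "m = Suc m'" by (cases m) auto
    obtain n' where n': "n = Suc n'" using mn by (cases n) auto
    have "E (w (Suc m')) (w n')" using symE[OF sg adj[of n']] mn m' n' by simp
    hence "w n' \<in> {y\<in>S. E (w (Suc m')) y}" using inS by auto
    hence "w n' = w m' \<or> w n' = w (Suc (Suc m'))" using nbrs[of m'] by auto
    thus False
    proof
      assume "w n' = w m'" thus False using minim[of n' m'] mn m' n' by auto
    next
      assume h: "w n' = w (Suc (Suc m'))"
      show False
      proof (cases "Suc (Suc m') < n'")
        case True thus ?thesis using minim[of n' "Suc (Suc m')"] h n' by auto
      next
        case False
        hence "n' = Suc (Suc m') \<or> n' = Suc m'" using mn m' n' by auto
        thus ?thesis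
        proof
          assume "n' = Suc (Suc m')" thus False using basic2[of "Suc m'"] mn m' n' by simp
        next
          assume "n' = Suc m'" thus False using mn m' n' adj[of "Suc m'"] irrE[OF sg] by simp
        qed
      qed
    qed
  qed
  have wn: "w n = x" using mn m0 by simp
  have n3: "n \<ge> 3"
  proof -
    have "n \<noteq> 0" using mn by auto
    moreover have "n \<noteq> 1" using wn xa irrE[OF sg, of x] by auto
    moreover have "n \<noteq> 2" using wn basic2[of 0] by (auto simp: numeral_2_eq_2)
    ultimately show ?thesis by linarith
  qed
  have injw: "inj_on w {..<n}"
    unfolding inj_on_def by (metis lessThan_iff linorder_neqE_nat minim)
  have wmod: "\<And>j. j \<le> n \<Longrightarrow> w (j mod n) = w j"
    using wn by (metis le_neq_implies_less mod_less mod_self walk.simps(1))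
  define W where "W = w ` {..<n}"
  have nb: "\<And>i. i < n \<Longrightarrow> {y\<in>S. E (w i) y} = {w ((i+1) mod n), w ((i+n-1) mod n)}"
  proof -
    fix i assume i: "i < n"
    show "{y\<in>S. E (w i) y} = {w ((i+1) mod n), w ((i+n-1) mod n)}"
    proof (cases i)
      case 0
      have sub: "{w 1, w (n-1)} \<subseteq> {y\<in>S. E (w 0) y}"
      proof -
        have "E (w (n-1)) (w n)" using adj[of "n-1"] n3 by (metis Suc_diff_1 less_le_trans zero_less_numeral)
        hence "E (w 0) (w (n-1))" using wn symE[OF sg] by auto
        thus ?thesis using inS adj[of 0] aS by auto
      qed
      have "w 1 \<noteq> w (n-1)"
      proof
        assume "w 1 = w (n-1)"
        moreover have "1 < n-1" "n-1 < n" using n3 by auto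
        ultimately show False using minim[of "n-1" 1] by auto
      qed
      hence "card {w 1, w (n-1)} = 2" by simp
      moreover have "card {y\<in>S. E (w 0) y} = 2" using reg inS unfolding two_regular_induced_def by blast
      ultimately have "{y\<in>S. E (w 0) y} = {w 1, w (n-1)}" using sub card2_eq by blast
      moreover have "(0+1) mod n = 1" "(0+n-1) mod n = n-1" using n3 by auto
      ultimately show ?thesis using 0 by simp
    next
      case (Suc i')
      have "w (Suc (Suc i')) = w ((i+1) mod n)" using wmod[of "i+1"] i Suc by simp
      moreover have "(i+n-1) mod n = i'" using i Suc by simp
      ultimately show ?thesis using nbrs[of i'] Suc by auto
    qed
  qed
  have comp: "component E S x = W"
  proof
    show "W \<subseteq> component E S x"
    proof -
      have "(induced_adj E S)\<^sup>*\<^sup>* x (w i)" for i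
      proof (induction i)
        case 0 then show ?case by simp
      next
        case (Suc i)
        have "induced_adj E S (w i) (w (Suc i))" using inS adj unfolding induced_adj_def by auto
        with Suc show ?case by (rule rtranclp.rtrancl_into_rtrancl)
      qed
      thus ?thesis unfolding W_def component_def by auto
    qed
  next
    show "component E S x \<subseteq> W"
    proof
      fix y assume "y \<in> component E S x"
      hence "(induced_adj E S)\<^sup>*\<^sup>* x y" unfolding component_def by simp
      thus "y \<in> W"
      proof (induction rule: rtranclp_induct)
        case base then show ?case unfolding W_def using n3 by (auto intro!: image_eqI[of _ _ 0])
      next
        case (step u v)
        then obtain i where i: "i < n" "u = w i" unfolding W_def by auto
        have "v \<in> {y\<in>S. E (w i) y}" using step(2) i unfolding induced_adj_def by auto
        hence "v = w ((i+1) mod n) \<or> v = w ((i+n-1) mod n)" using nb[OF i(1)] by auto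
        moreover have "(i+1) mod n < n" "(i+n-1) mod n < n" using n3 by auto
        ultimately show ?case unfolding W_def by auto
      qed
    qed
  qed
  have cardW: "card W = n" unfolding W_def using injw by (simp add: card_image)
  define vs where "vs = map w [0..<n]"
  have vsnth: "\<And>i. i < n \<Longrightarrow> vs ! i = w i" unfolding vs_def by simp
  show ?thesis
    unfolding induces_cycle_def comp cardW
  proof (intro conjI exI[of _ vs])
    show "3 \<le> n" by (rule n3)
    show "length vs = n" unfolding vs_def by simp
    show "distinct vs" unfolding vs_def using injw by (simp add: distinct_map atLeast_upt)
    show "set vs = W" unfolding vs_def W_def by (simp add: atLeast_upt)
    show "\<forall>u\<in>W. \<forall>v\<in>W. E u v \<longleftrightarrow> (\<exists>i<n. u = vs ! i \<and> v = vs ! ((i + 1) mod n) \<or> v = vs ! i \<and> u = vs ! ((i + 1) mod n))"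
    proof (intro ballI iffI)
      fix u v assume u: "u \<in> W" and v: "v \<in> W" and uv: "E u v"
      obtain i where i: "i < n" "u = w i" using u unfolding W_def by auto
      have "v \<in> S" using v inS unfolding W_def by auto
      hence "v \<in> {y\<in>S. E (w i) y}" using uv i by auto
      hence "v = w ((i+1) mod n) \<or> v = w ((i+n-1) mod n)" using nb[OF i(1)] by auto
      thus "\<exists>i<n. u = vs ! i \<and> v = vs ! ((i + 1) mod n) \<or> v = vs ! i \<and> u = vs ! ((i + 1) mod n)"
      proof
        assume "v = w ((i+1) mod n)"
        thus ?thesis using i vsnth n3 by (intro exI[of _ i]) auto
      next
        assume hv: "v = w ((i+n-1) mod n)"
        let ?j = "(i+n-1) mod n"
        have j: "?j < n" using n3 by auto
        have "(?j + 1) mod n = i"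
        proof (cases i)
          case 0 thus ?thesis using n3 by simp
        next
          case (Suc i') thus ?thesis using i by simp
        qed
        thus ?thesis using i vsnth j hv by (intro exI[of _ ?j]) auto
      qed
    next
      fix u v assume "\<exists>i<n. u = vs ! i \<and> v = vs ! ((i + 1) mod n) \<or> v = vs ! i \<and> u = vs ! ((i + 1) mod n)"
      then obtain i where i: "i < n" and h: "u = vs ! i \<and> v = vs ! ((i + 1) mod n) \<or> v = vs ! i \<and> u = vs ! ((i + 1) mod n)" by blast
      have "(i+1) mod n < n" using n3 by auto
      hence e: "vs ! ((i + 1) mod n) = w (Suc i)" using vsnth wmod[of "i+1"] i by simp
      have "E (w i) (w (Suc i))" by (rule adj)
      thus "E u v" using h e vsnth[OF i] symE[OF sg] by auto
    qed
  qed
qed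



lemma autD: "g \<in> automorphisms E \<Longrightarrow> bij g \<and> (\<forall>x y. E x y \<longleftrightarrow> E (g x) (g y))"
  by (simp add: automorphisms_def)

lemma bij_image_Collect:
  assumes "bij g" "\<And>x. P (g x) \<longleftrightarrow> Q x"
  shows "g ` {x. Q x} = {y. P y}"
proof -
  have "y \<in> g ` {x. Q x}" if "P y" for y
  proof -
    obtain x where "y = g x" using assms(1) unfolding bij_def surj_def by blast
    thus ?thesis using that assms(2) by auto
  qed
  thus ?thesis using assms(2) by auto
qed

lemma comp_map:
  assumes g: "g \<in> automorphisms E" and gS: "g ` S = S"
  shows "g ` component E S u \<subseteq> component E S (g u)"
proof
  fix v' assume "v' \<in> g ` component E S u"
  then obtain v where v: "v' = g v" "(induced_adj E S)\<^sup>*\<^sup>* u v" unfolding component_def by auto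
  have "(induced_adj E S)\<^sup>*\<^sup>* (g u) (g v)" using v(2)
  proof (induction rule: rtranclp_induct)
    case base then show ?case by simp
  next
    case (step a b)
    have "induced_adj E S (g a) (g b)" using step(2) autD[OF g] gS unfolding induced_adj_def by blast
    with step(3) show ?case by (rule rtranclp.rtrancl_into_rtrancl)
  qed
  thus "v' \<in> component E S (g u)" unfolding component_def v(1) by simp
qed

theorem lemma4p1:
  fixes E :: "'a::finite \<Rightarrow> 'a \<Rightarrow> bool" and z :: "real^'a"
  assumes "simple_graph E" and "cubic E" and "vertex_transitive E"
    and "simple_eigenvalue (adj_matrix E) 1"
    and "adj_matrix E *v z = z"
    and "\<forall>x. z $ x = 1 \<or> z $ x = -1"
  defines "Vp \<equiv> {x. z $ x = 1}" and "Vm \<equiv> {x. z $ x = -1}"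
    and "M \<equiv> {{x, y} | x y. E x y \<and> z $ x = 1 \<and> z $ y = -1}"
  shows "union_of_equal_cycles E Vp
    \<and> (induced_isomorphic E Vp Vm \<and> block (automorphisms E) Vp \<and> block (automorphisms E) Vm)
    \<and> (two_partition Vp Vm \<and> two_regular_induced E Vp \<and> two_regular_induced E Vm
       \<and> (\<forall>P Q. two_partition P Q \<and> two_regular_induced E P \<and> two_regular_induced E Q
                \<longrightarrow> {P, Q} = {Vp, Vm}))
    \<and> perfect_matching E M
    \<and> (\<forall>g\<in>automorphisms E. (\<lambda>e. g ` e) ` M = M)
    \<and> (\<forall>x y x' y'. {x, y} \<in> M \<and> {x', y'} \<in> M \<and> x \<noteq> y \<and> x' \<noteq> y'
         \<longrightarrow> (\<exists>g\<in>automorphisms E. g x = x' \<and> g y = y'))"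
proof -
  note sg = assms(1) and cub = assms(2) and vt = assms(3) and se = assms(4) and ev = assms(5)
    and zpm = assms(6)
  define D where "D x = {y. E x y \<and> z$y \<noteq> z$x}" for x
  have cardD: "card (D x) = 1" for x using eig_iff[OF cub zpm] ev unfolding D_def by blast
  have Dsub: "D x \<subseteq> {y. E x y}" for x unfolding D_def by auto
  have zne: "z $ y \<noteq> z $ x \<longleftrightarrow> z $ y = - z $ x" for x y using zpm[rule_format, of x] zpm[rule_format, of y] by auto
  have aut_z: "(\<forall>x. z $ (g x) = z $ x) \<or> (\<forall>x. z $ (g x) = - z $ x)" if g: "g \<in> automorphisms E" for g
  proof -
    note gd = autD[OF g]
    define w :: "real^'a" where "w = (\<chi> x. z $ (g x))"
    have wx: "w $ x = z $ (g x)" for x unfolding w_def by simp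
    have wpm: "\<forall>x. w$x=1 \<or> w$x=-1" using zpm wx by auto
    have "card {y. E x y \<and> w$y \<noteq> w$x} = 1" for x
    proof -
      have "{y. E x y \<and> w$y \<noteq> w$x} = g -` D (g x)" using gd unfolding D_def wx by auto
      moreover have "card (g -` D (g x)) = card (D (g x))"
        using gd by (intro card_vimage_inj) (auto simp: bij_def)
      ultimately show ?thesis using cardD by simp
    qed
    hence "adj_matrix E *v w = w" using eig_iff[OF cub wpm] by blast
    hence "w = z \<or> w = -z" using eig_unique[OF se ev _ zpm wpm] by blast
    thus ?thesis by (auto simp: vec_eq_iff wx)
  qed
  have img: "(g ` Vp = Vp \<and> g ` Vm = Vm) \<or> (g ` Vp = Vm \<and> g ` Vm = Vp)" if g: "g \<in> automorphisms E" for g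
  proof -
    have b: "bij g" using autD[OF g] by blast
    from aut_z[OF g] show ?thesis
    proof
      assume h: "\<forall>x. z $ (g x) = z $ x"
      show ?thesis unfolding Vp_def Vm_def
        by (intro disjI1 conjI bij_image_Collect[OF b]) (simp_all add: h)
    next
      assume h: "\<forall>x. z $ (g x) = - z $ x"
      show ?thesis unfolding Vp_def Vm_def
        by (intro disjI2 conjI bij_image_Collect[OF b]) (auto simp: h)
    qed
  qed
  have disj: "Vp \<inter> Vm = {}" unfolding Vp_def Vm_def by auto
  have un: "Vp \<union> Vm = UNIV" unfolding Vp_def Vm_def using zpm by auto
  have nonempty: "Vp \<noteq> {} \<and> Vm \<noteq> {}"
  proof -
    obtain x0 :: 'a where True by auto
    have "D x0 \<noteq> {}" using cardD[of x0] by auto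
    then obtain y where "z $ y \<noteq> z $ x0" unfolding D_def by auto
    thus ?thesis unfolding Vp_def Vm_def using zpm[rule_format, of x0] zpm[rule_format, of y] by auto
  qed
  then obtain p0 m0 where p0: "p0 \<in> Vp" and m0: "m0 \<in> Vm" by auto
  have same2: "card {y. E x y \<and> z$y = z$x} = 2" for x
  proof -
    have "{y. E x y \<and> z$y = z$x} = {y. E x y} - D x" unfolding D_def by auto
    moreover have "card ({y. E x y} - D x) = 2"
      using card_Diff_subset[OF _ Dsub[of x]] cardD[of x] cub unfolding cubic_def by simp
    ultimately show ?thesis by simp
  qed
  have reg_p: "two_regular_induced E Vp"
    unfolding two_regular_induced_def
  proof
    fix x assume "x \<in> Vp"
    hence "{y\<in>Vp. E x y} = {y. E x y \<and> z$y = z$x}" unfolding Vp_def by auto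
    thus "card {y\<in>Vp. E x y} = 2" using same2 by simp
  qed
  have reg_m: "two_regular_induced E Vm"
    unfolding two_regular_induced_def
  proof
    fix x assume "x \<in> Vm"
    hence "{y\<in>Vm. E x y} = {y. E x y \<and> z$y = z$x}" unfolding Vm_def by auto
    thus "card {y\<in>Vm. E x y} = 2" using same2 by simp
  qed
  have part1: "union_of_equal_cycles E Vp"
  proof -
    have le: "card (component E Vp x) \<le> card (component E Vp y)" if "x \<in> Vp" "y \<in> Vp" for x y
    proof -
      obtain g where g: "g \<in> automorphisms E" "g x = y" using vt unfolding vertex_transitive_def by blast
      have "g ` Vp = Vp" using img[OF g(1)] that g(2) disj by blast
      hence "g ` component E Vp x \<subseteq> component E Vp y" using comp_map[OF g(1)] g(2) by blast
      moreover have "card (g ` component E Vp x) = card (component E Vp x)"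
        using autD[OF g(1)] by (intro card_image) (auto simp: bij_def intro: inj_on_subset)
      ultimately show ?thesis by (metis card_mono finite)
    qed
    show ?thesis unfolding union_of_equal_cycles_def
    proof (intro exI[of _ "card (component E Vp p0)"] ballI)
      fix x assume x: "x \<in> Vp"
      have "card (component E Vp x) = card (component E Vp p0)" using le[OF x p0] le[OF p0 x] by simp
      thus "induces_cycle E (component E Vp x) (card (component E Vp p0))"
        using cycle_component[OF sg reg_p x] by simp
    qed
  qed
  have part2: "induced_isomorphic E Vp Vm \<and> block (automorphisms E) Vp \<and> block (automorphisms E) Vm"
  proof (intro conjI)
    obtain g where g: "g \<in> automorphisms E" "g p0 = m0" using vt unfolding vertex_transitive_def by blast
    have "g ` Vp = Vm" using img[OF g(1)] g(2) p0 m0 disj by blast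
    moreover have "inj g" using autD[OF g(1)] bij_def by blast
    ultimately have "bij_betw g Vp Vm" using inj_on_subset[of g UNIV Vp] by (simp add: bij_betw_def)
    thus "induced_isomorphic E Vp Vm" unfolding induced_isomorphic_def using autD[OF g(1)] by blast
    show "block (automorphisms E) Vp" unfolding block_def using nonempty img disj by blast
    show "block (automorphisms E) Vm" unfolding block_def using nonempty img disj by blast
  qed
  have part3: "\<forall>P Q. two_partition P Q \<and> two_regular_induced E P \<and> two_regular_induced E Q
                \<longrightarrow> {P, Q} = {Vp, Vm}"
  proof (intro allI impI)
    fix P Q assume h: "two_partition P Q \<and> two_regular_induced E P \<and> two_regular_induced E Q"
    have PQ: "P \<inter> Q = {}" "P \<union> Q = UNIV" using h unfolding two_partition_def by auto
    define w :: "real^'a" where "w = (\<chi> x. if x \<in> P then 1 else -1)"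
    have wx: "w $ x = (if x \<in> P then 1 else -1)" for x unfolding w_def by simp
    have wpm: "\<forall>x. w$x=1 \<or> w$x=-1" using wx by auto
    have "card {y. E x y \<and> w$y \<noteq> w$x} = 1" for x
    proof -
      obtain C where C: "x \<in> C" "two_regular_induced E C" "\<forall>y. y \<in> C \<longleftrightarrow> (y \<in> P \<longleftrightarrow> x \<in> P)"
      proof (cases "x \<in> P")
        case True thus ?thesis using that[of P] h by auto
      next
        case False thus ?thesis using that[of Q] h PQ by auto
      qed
      have "{y. E x y \<and> w$y \<noteq> w$x} = {y. E x y} - {y\<in>C. E x y}" using C(3) wx by auto
      moreover have "card {y\<in>C. E x y} = 2" using C unfolding two_regular_induced_def by blast
      moreover have "card {y. E x y} = 3" using cub unfolding cubic_def by blast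
      moreover have "card ({y. E x y} - {y\<in>C. E x y}) = card {y. E x y} - card {y\<in>C. E x y}"
        by (rule card_Diff_subset) auto
      ultimately show ?thesis by simp
    qed
    hence "adj_matrix E *v w = w" using eig_iff[OF cub wpm] by blast
    hence "w = z \<or> w = -z" using eig_unique[OF se ev _ zpm wpm] by blast
    thus "{P, Q} = {Vp, Vm}"
    proof
      assume "w = z"
      hence "\<forall>x. z $ x = (if x \<in> P then 1 else -1)" using wx by simp
      hence "P = Vp" "Q = Vm" unfolding Vp_def Vm_def using PQ by auto
      thus ?thesis by simp
    next
      assume "w = -z"
      hence "\<forall>x. z $ x = - w $ x" by simp
      hence "\<forall>x. z $ x = (if x \<in> P then -1 else 1)" using wx by simp
      hence "P = Vm" "Q = Vp" unfolding Vp_def Vm_def using PQ by auto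
      thus ?thesis by auto
    qed
  qed
  have memM: "E a b \<and> z $ a \<noteq> z $ b" if "{a, b} \<in> M" for a b
  proof -
    have "\<exists>x y. {a, b} = {x, y} \<and> E x y \<and> z $ x = 1 \<and> z $ y = -1"
      using that unfolding M_def by (rule CollectD)
    then obtain x y where xy0: "{a, b} = {x, y} \<and> E x y \<and> z $ x = 1 \<and> z $ y = -1" by (elim exE)
    hence xy: "{a, b} = {x, y}" "E x y" "z $ x = 1" "z $ y = -1" by simp_all
    from xy(1) have "(a = x \<and> b = y) \<or> (a = y \<and> b = x)" by (simp add: doubleton_eq_iff)
    thus ?thesis using xy symE[OF sg xy(2)] by auto
  qed
  have Msub: "M \<subseteq> edges E" unfolding M_def edges_def by blast
  have pm: "perfect_matching E M"
    unfolding perfect_matching_def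
  proof (intro conjI Msub allI)
    fix v
    obtain u where u: "D v = {u}" using cardD[of v] card_1_singletonE by blast
    have uD: "E v u" "z $ u = - z $ v" using u zne unfolding D_def by blast+
    have Du: "\<And>y. E v y \<Longrightarrow> z $ y \<noteq> z $ v \<Longrightarrow> y = u" using u unfolding D_def by blast
    show "\<exists>!e. e \<in> M \<and> v \<in> e"
    proof (cases "z $ v = 1")
      case True
      show ?thesis
      proof (rule ex1I[of _ "{v, u}"])
        show "{v, u} \<in> M \<and> v \<in> {v, u}" unfolding M_def using True uD by auto
        fix e assume e: "e \<in> M \<and> v \<in> e"
        then obtain a b where ab: "e = {a, b}" "E a b" "z $ a = 1" "z $ b = -1" unfolding M_def by blast
        hence "v = a" using e True by auto
        thus "e = {v, u}" using ab Du True by auto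
      qed
    next
      case False
      hence F: "z $ v = -1" using zpm by auto
      show ?thesis
      proof (rule ex1I[of _ "{u, v}"])
        show "{u, v} \<in> M \<and> v \<in> {u, v}" unfolding M_def using F uD symE[OF sg uD(1)] by auto
        fix e assume e: "e \<in> M \<and> v \<in> e"
        then obtain a b where ab: "e = {a, b}" "E a b" "z $ a = 1" "z $ b = -1" unfolding M_def by blast
        hence "v = b" using e F by auto
        thus "e = {u, v}" using ab Du[of a] F symE[OF sg ab(2)] by auto
      qed
    qed
  qed
  have fixM: "\<forall>g\<in>automorphisms E. (\<lambda>e. g ` e) ` M = M"
  proof
    fix g assume g: "g \<in> automorphisms E"
    note gd = autD[OF g]
    have sub: "(\<lambda>e. g ` e) ` M \<subseteq> M"
    proof
      fix e' assume "e' \<in> (\<lambda>e. g ` e) ` M"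
      then obtain x y where xy: "e' = {g x, g y}" "E x y" "z $ x = 1" "z $ y = -1" unfolding M_def by auto
      have E': "E (g x) (g y)" "E (g y) (g x)" using gd xy symE[OF sg] by blast+
      from aut_z[OF g] show "e' \<in> M"
      proof
        assume "\<forall>x. z $ (g x) = z $ x"
        hence "z $ (g x) = 1" "z $ (g y) = -1" using xy by auto
        thus ?thesis unfolding M_def using xy(1) E'(1) by blast
      next
        assume "\<forall>x. z $ (g x) = - z $ x"
        hence "e' = {g y, g x}" "z $ (g y) = 1" "z $ (g x) = -1" using xy by (auto simp: insert_commute)
        thus ?thesis unfolding M_def using E' by blast
      qed
    qed
    have "inj_on (\<lambda>e. g ` e) M"
      using gd by (intro inj_on_image) (auto simp: bij_def intro: inj_on_subset)
    hence "card ((\<lambda>e. g ` e) ` M) = card M" by (rule card_image)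
    thus "(\<lambda>e. g ` e) ` M = M" using sub by (intro card_subset_eq) auto
  qed
  have arcs: "\<forall>x y x' y'. {x, y} \<in> M \<and> {x', y'} \<in> M \<and> x \<noteq> y \<and> x' \<noteq> y'
         \<longrightarrow> (\<exists>g\<in>automorphisms E. g x = x' \<and> g y = y')"
  proof (intro allI impI)
    fix x y x' y' assume h: "{x, y} \<in> M \<and> {x', y'} \<in> M \<and> x \<noteq> y \<and> x' \<noteq> y'"
    have xy: "E x y" "z $ x \<noteq> z $ y" and xy': "E x' y'" "z $ x' \<noteq> z $ y'" using memM h by blast+
    obtain g where g: "g \<in> automorphisms E" "g x = x'" using vt unfolding vertex_transitive_def by blast
    have "E x' (g y)" using autD[OF g(1)] xy g(2) by blast
    moreover have "z $ (g y) \<noteq> z $ x'"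
    proof (cases "\<forall>x. z $ (g x) = z $ x")
      case True thus ?thesis using xy(2) g(2) by metis
    next
      case False
      hence "\<forall>x. z $ (g x) = - z $ x" using aut_z[OF g(1)] by blast
      thus ?thesis using xy(2) g(2) by (metis neg_equal_iff_equal)
    qed
    ultimately have "g y \<in> D x'" unfolding D_def by simp
    moreover have "y' \<in> D x'" unfolding D_def using xy' by auto
    ultimately have "g y = y'" using cardD[of x'] by (metis card_1_singletonE singletonD)
    thus "\<exists>g\<in>automorphisms E. g x = x' \<and> g y = y'" using g by blast
  qed
  have tp: "two_partition Vp Vm" unfolding two_partition_def using nonempty disj un by blast
  show ?thesis using part1 part2 part3 tp reg_p reg_m pm fixM arcs by blast
qed

end
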